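(* Let $N$ be a nonnegative integer, let $\eta_1,\eta_2$ be real numbers with $0<\eta_1,\eta_2<1$ and $\eta_1+\eta_2<1$, and let $u_1,v_1,u_2,v_2$ be arbitrary complex numbers. Then for all nonnegative integers $n_1,n_2$ with $n_1+n_2\le N$, \[ \sum_{\substack{x_1,x_2\ge 0\\ x_1+x_2\le N}} b_2(x_1,x_2;N;\eta_1,\eta_2)\,P_{n_1,n_2}(x_1,x_2)=(1-\eta_1u_1-\eta_2v_1)^{n_1}(1-\eta_1u_2-\eta_2v_2)^{n_2}. \]
   Context: Notation: $(a)_k=a(a+1)\cdots(a+k-1)$, $(a)_0=1$, is the Pochhammer symbol. For a nonnegative integer $N$ and nonnegative integers $m_1,m_2,x_1,x_2$ with $m_1+m_2\le N$, $x_1+x_2\le N$, and parameters $u_1,v_1,u_2,v_2$, define the 2-variable Krawtchouk polynomial \[ P_{m_1,m_2}(x_1,x_2)=\sum_{\substack{i,j,k,l\ge 0\\ i+j+k+l\le N}}\frac{(-m_1)_{i+j}(-m_2)_{k+l}(-x_1)_{i+k}(-x_2)_{j+l}}{i!\,j!\,k!\,l!\,(-N)_{i+j+k+l}}\,u_1^i v_1^j u_2^k v_2^l . \] The trinomial distribution is $b_2(x_1,x_2;N;\eta_1,\eta_2)=\frac{N!}{x_1!\,x_2!\,(N-x_1-x_2)!}\eta_1^{x_1}\eta_2^{x_2}(1-\eta_1-\eta_2)^{N-x_1-x_2}$. *)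

theory Defs
  imports "HOL-Analysis.Analysis"
begin

definition krawtchouk2 ::
  "nat \<Rightarrow> complex \<Rightarrow> complex \<Rightarrow> complex \<Rightarrow> complex \<Rightarrow> nat \<Rightarrow> nat \<Rightarrow> nat \<Rightarrow> nat \<Rightarrow> complex" where
  "krawtchouk2 N u1 v1 u2 v2 m1 m2 x1 x2 =
    (\<Sum>(i,j,k,l) \<in> {(i,j,k,l). i + j + k + l \<le> N}.
       pochhammer (- of_nat m1) (i + j) * pochhammer (- of_nat m2) (k + l)
       * pochhammer (- of_nat x1) (i + k) * pochhammer (- of_nat x2) (j + l)
       / (fact i * fact j * fact k * fact l * pochhammer (- of_nat N) (i + j + k + l))
       * u1 ^ i * v1 ^ j * u2 ^ k * v2 ^ l)"

definition trinomial :: "nat \<Rightarrow> nat \<Rightarrow> nat \<Rightarrow> real \<Rightarrow> real \<Rightarrow> real" where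
  "trinomial x1 x2 N eta1 eta2 =
    fact N / (fact x1 * fact x2 * fact (N - x1 - x2))
    * eta1 ^ x1 * eta2 ^ x2 * (1 - eta1 - eta2) ^ (N - x1 - x2)"

end

theory Submission imports Defs begin


lemma K1:
  assumes "p \<le> x"
  shows "pochhammer (- of_nat x :: 'a::field_char_0) p = (-1)^p * fact x / fact (x - p)"
proof -
  have "of_nat (x choose p) = ((-1)^p * pochhammer (- of_nat x) p / fact p :: 'a)"
    by (simp add: binomial_gbinomial gbinomial_pochhammer)
  hence "pochhammer (- of_nat x :: 'a) p = (-1)^p * (fact p * of_nat (x choose p))"
    by (simp add: field_simps)
  also have "\<dots> = (-1)^p * fact x / fact (x - p)"
    using fact_binomial[OF assms, where 'a='a] by simp
  finally show ?thesis .
qed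

lemma K2:
  assumes "p \<le> x" "x + q \<le> n"
  shows "of_nat (n choose x) * pochhammer (- of_nat x) p * pochhammer (- of_nat (n-x)) q
     = pochhammer (- of_nat n :: 'a::field_char_0) (p+q) * of_nat ((n-p-q) choose (x-p))"
proof -
  have e: "n - p - q - (x - p) = n - x - q" "n - x - q = n - (x + q)" using assms by simp_all
  have h1: "pochhammer (- of_nat x :: 'a) p = (-1)^p * fact x / fact (x - p)" using assms by (rule_tac K1) simp
  have h2: "pochhammer (- of_nat (n-x) :: 'a) q = (-1)^q * fact (n-x) / fact (n - x - q)" using assms by (rule_tac K1) simp
  have h3: "pochhammer (- of_nat n :: 'a) (p+q) = (-1)^(p+q) * fact n / fact (n - p - q)"
    using assms K1[of "p+q" n, where 'a='a] by (simp add: diff_diff_add)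
  have h4: "(of_nat (n choose x) :: 'a) = fact n / (fact x * fact (n - x))" using assms by (rule_tac binomial_fact) simp
  have h5: "(of_nat ((n-p-q) choose (x-p)) :: 'a) = fact (n-p-q) / (fact (x-p) * fact (n - x - q))"
    using assms binomial_fact[of "x-p" "n-p-q", where 'a='a] e by simp
  show ?thesis
    unfolding h1 h2 h3 h4 h5 by (simp add: power_add field_simps)
qed


lemma B2:
  assumes "p + q \<le> n"
  shows "(\<Sum>x\<le>n. of_nat (n choose x) * pochhammer (- of_nat x) p * pochhammer (- of_nat (n-x)) q
            * a^x * d^(n-x-q))
       = pochhammer (- of_nat n :: 'a::field_char_0) (p+q) * a^p * (a+d)^(n-p-q)"
proof -
  define M where "M = n - p - q"
  have nM: "n = M + p + q" using assms M_def by simp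
  let ?f = "\<lambda>x. of_nat (n choose x) * pochhammer (- of_nat x :: 'a) p * pochhammer (- of_nat (n-x)) q
            * a^x * d^(n-x-q)"
  have "(\<Sum>x\<le>n. ?f x) = (\<Sum>x\<in>{0+p..M+p}. ?f x)"
  proof (rule sum.mono_neutral_right)
    show "finite {..n}" by simp
    show "{0+p..M+p} \<subseteq> {..n}" using nM by auto
    show "\<forall>x\<in>{..n} - {0+p..M+p}. ?f x = 0"
    proof
      fix x assume "x \<in> {..n} - {0+p..M+p}"
      hence "x < p \<or> n - x < q" using nM by auto
      thus "?f x = 0" by (auto simp: pochhammer_of_nat_eq_0_iff)
    qed
  qed
  also have "\<dots> = (\<Sum>y\<in>{0..M}. ?f (y + p))" by (rule sum.shift_bounds_cl_nat_ivl)
  also have "\<dots> = (\<Sum>y\<le>M. pochhammer (- of_nat n :: 'a) (p+q) * a^p * (of_nat (M choose y) * a^y * d^(M-y)))"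
  proof (rule sum.cong)
    fix y assume "y \<in> {..M}"
    hence y: "y \<le> M" by simp
    have k: "of_nat (n choose (y+p)) * pochhammer (- of_nat (y+p)) p * pochhammer (- of_nat (n-(y+p))) q
       = pochhammer (- of_nat n :: 'a) (p+q) * of_nat ((n-p-q) choose (y+p-p))"
      by (rule K2) (use y nM in auto)
    have e: "n - (y+p) - q = M - y" "n-p-q = M" "y+p-p = y" using nM y by auto
    show "?f (y+p) = pochhammer (- of_nat n :: 'a) (p+q) * a^p * (of_nat (M choose y) * a^y * d^(M-y))"
      using k unfolding e by (simp add: power_add algebra_simps)
  qed (auto simp: atLeast0AtMost)
  also have "\<dots> = pochhammer (- of_nat n :: 'a) (p+q) * a^p * (a+d)^M"
    by (simp add: binomial_ring sum_distrib_left)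
  finally show ?thesis by (simp add: M_def)
qed


lemma B1:
  "(\<Sum>x\<le>m. of_nat (m choose x) * pochhammer (- of_nat x) q * b^x * c^(m-x))
       = pochhammer (- of_nat m :: 'a::field_char_0) q * b^q * (b+c)^(m-q)"
proof (cases "q \<le> m")
  case True
  from B2[of q 0 m b c] True show ?thesis by simp
next
  case False
  hence "\<forall>x\<in>{..m}. pochhammer (- of_nat x :: 'a) q = 0" by (auto simp: pochhammer_of_nat_eq_0_iff)
  hence "(\<Sum>x\<le>m. of_nat (m choose x) * pochhammer (- of_nat x) q * b^x * c^(m-x)) = (0::'a)"
    by (intro sum.neutral) simp
  with False show ?thesis by (simp add: pochhammer_of_nat_eq_0_iff)
qed

lemma pairsum:
  fixes N :: nat
  shows "(\<Sum>(x1,x2)\<in>{(x1,x2). x1 + x2 \<le> N}. f x1 x2) = (\<Sum>x1\<le>N. \<Sum>x2\<le>N-x1. f x1 x2)"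
proof -
  have "{(x1,x2). x1 + x2 \<le> N} = Sigma {..N} (\<lambda>x1. {..N-x1})" by auto
  thus ?thesis by (simp add: sum.Sigma)
qed

lemma moment:
  assumes "p + q \<le> N"
  shows "(\<Sum>(x1,x2)\<in>{(x1,x2). x1 + x2 \<le> N}.
      fact N / (fact x1 * fact x2 * fact (N - x1 - x2)) * a^x1 * b^x2 * c^(N-x1-x2)
      * pochhammer (- of_nat x1) p * pochhammer (- of_nat x2) q)
    = pochhammer (- of_nat N :: 'a::field_char_0) (p+q) * a^p * b^q * (a+b+c)^(N-p-q)"
proof -
  have "(\<Sum>(x1,x2)\<in>{(x1,x2). x1 + x2 \<le> N}.
      fact N / (fact x1 * fact x2 * fact (N - x1 - x2)) * a^x1 * b^x2 * c^(N-x1-x2)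
      * pochhammer (- of_nat x1) p * pochhammer (- of_nat x2) q)
    = (\<Sum>x1\<le>N. of_nat (N choose x1) * pochhammer (- of_nat x1) p * a^x1 *
         (\<Sum>x2\<le>N-x1. of_nat ((N-x1) choose x2) * pochhammer (- of_nat x2) q * b^x2 * c^(N-x1-x2)))"
    unfolding pairsum sum_distrib_left
  proof (intro sum.cong refl)
    fix x1 x2 assume h: "x1 \<in> {..N}" "x2 \<in> {..N-x1}"
    have e1: "(of_nat (N choose x1) :: 'a) = fact N / (fact x1 * fact (N - x1))"
      using h by (intro binomial_fact) simp
    have e2: "(of_nat ((N-x1) choose x2) :: 'a) = fact (N-x1) / (fact x2 * fact (N - x1 - x2))"
      using h by (intro binomial_fact) simp
    show "fact N / (fact x1 * fact x2 * fact (N - x1 - x2)) * a^x1 * b^x2 * c^(N-x1-x2)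
      * pochhammer (- of_nat x1) p * pochhammer (- of_nat x2) q =
      of_nat (N choose x1) * pochhammer (- of_nat x1) p * a^x1 *
         (of_nat ((N-x1) choose x2) * pochhammer (- of_nat x2) q * b^x2 * c^(N-x1-x2))"
      unfolding e1 e2 by (simp add: field_simps)
  qed
  also have "\<dots> = (\<Sum>x1\<le>N. of_nat (N choose x1) * pochhammer (- of_nat x1) p * pochhammer (- of_nat (N-x1)) q
            * a^x1 * (b+c)^(N-x1-q)) * b^q"
    unfolding B1 sum_distrib_right by (intro sum.cong refl) (simp add: algebra_simps)
  also have "\<dots> = pochhammer (- of_nat N :: 'a) (p+q) * a^p * (a+(b+c))^(N-p-q) * b^q"
    using B2[OF assms, of a "b+c"] by simp
  finally show ?thesis by (simp add: algebra_simps)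
qed


lemma tri_sum:
  "(\<Sum>i\<le>m. \<Sum>j\<le>m-i. pochhammer (- of_nat m :: 'a::field_char_0) (i+j) / (fact i * fact j) * X^i * Y^j)
    = (1 - X - Y)^m"
proof -
  have "(\<Sum>i\<le>m. \<Sum>j\<le>m-i. pochhammer (- of_nat m :: 'a) (i+j) / (fact i * fact j) * X^i * Y^j)
     = (\<Sum>i\<le>m. of_nat (m choose i) * (-X)^i * (\<Sum>j\<le>m-i. of_nat ((m-i) choose j) * (-Y)^j * 1^(m-i-j)))"
  proof (intro sum.cong refl)
    fix i assume i: "i \<in> {..m}"
    show "(\<Sum>j\<le>m-i. pochhammer (- of_nat m :: 'a) (i+j) / (fact i * fact j) * X^i * Y^j) =
       of_nat (m choose i) * (-X)^i * (\<Sum>j\<le>m-i. of_nat ((m-i) choose j) * (-Y)^j * 1^(m-i-j))"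
      unfolding sum_distrib_left
    proof (intro sum.cong refl)
      fix j assume j: "j \<in> {..m-i}"
      have p: "pochhammer (- of_nat m :: 'a) (i+j) = pochhammer (- of_nat m) i * pochhammer (- of_nat (m-i)) j"
        using i by (simp add: pochhammer_product' of_nat_diff)
      have b1: "(of_nat (m choose i) :: 'a) = (-1)^i * pochhammer (- of_nat m) i / fact i"
        by (simp add: binomial_gbinomial gbinomial_pochhammer)
      have b2: "(of_nat ((m-i) choose j) :: 'a) = (-1)^j * pochhammer (- of_nat (m-i)) j / fact j"
        by (simp add: binomial_gbinomial gbinomial_pochhammer)
      show "pochhammer (- of_nat m :: 'a) (i+j) / (fact i * fact j) * X^i * Y^j =
         of_nat (m choose i) * (-X)^i * (of_nat ((m-i) choose j) * (-Y)^j * 1^(m-i-j))"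
        unfolding p b1 b2 power_minus[of X] power_minus[of Y]
      proof -
        have s1: "((-1::'a)^i * (-1)^i) = 1" "((-1::'a)^j * (-1)^j) = 1"
          by (simp_all add: power_mult_distrib[symmetric])
        let ?A = "pochhammer (- of_nat m :: 'a) i" let ?B = "pochhammer (- of_nat (m-i) :: 'a) j"
        have "?A * ?B / (fact i * fact j) * X ^ i * Y ^ j
           = ((-1::'a)^i * (-1)^i) * ((-1)^j * (-1)^j) * (?A / fact i) * (?B / fact j) * X^i * Y^j"
          unfolding s1 by simp
        thus "?A * ?B / (fact i * fact j) * X ^ i * Y ^ j =
          (- 1) ^ i * ?A / fact i * ((- 1) ^ i * X ^ i) * ((- 1) ^ j * ?B / fact j * ((- 1) ^ j * Y ^ j) * 1 ^ (m - i - j))"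
          by (simp only: mult_ac times_divide_eq_right times_divide_eq_left power_one mult_1_right mult_1_left divide_divide_eq_left)
      qed
    qed
  qed
  also have "\<dots> = (\<Sum>i\<le>m. of_nat (m choose i) * (-X)^i * (1 - Y)^(m-i))"
  proof (intro sum.cong refl)
    fix i show "of_nat (m choose i) * (-X)^i * (\<Sum>j\<le>m-i. of_nat ((m-i) choose j) * (-Y)^j * 1^(m-i-j)) =
       of_nat (m choose i) * (-X)^i * ((1::'a) - Y)^(m-i)"
      using binomial_ring[of "-Y" "1::'a" "m-i"] by simp
  qed
  also have "\<dots> = (-X + (1 - Y))^m" using binomial_ring[of "-X" "1-Y" m] by simp
  also have "-X + (1 - Y) = 1 - X - Y" by simp
  finally show ?thesis .
qed


lemma quad_sum:
  fixes G :: "nat \<Rightarrow> nat \<Rightarrow> nat \<Rightarrow> nat \<Rightarrow> 'a::comm_ring_1"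
  shows "(\<Sum>(i,j,k,l)\<in>{(i,j,k,l). i + j \<le> m1 \<and> k + l \<le> m2}. G i j k l)
    = (\<Sum>i\<le>m1. \<Sum>j\<le>m1-i. \<Sum>k\<le>m2. \<Sum>l\<le>m2-k. G i j k l)"
proof -
  have "{(i,j,k,l). i + j \<le> m1 \<and> k + l \<le> m2} = Sigma {..m1} (\<lambda>i. Sigma {..m1-i} (\<lambda>j. Sigma {..m2} (\<lambda>k. {..m2-k})))"
    by auto
  thus ?thesis by (simp add: sum.Sigma)
qed

theorem mainTheorem1:
  fixes N n1 n2 :: nat and eta1 eta2 :: real and u1 v1 u2 v2 :: complex
  assumes "0 < eta1" "eta1 < 1" "0 < eta2" "eta2 < 1" "eta1 + eta2 < 1"
    and "n1 + n2 \<le> N"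
  shows "(\<Sum>(x1,x2) \<in> {(x1,x2). x1 + x2 \<le> N}.
            complex_of_real (trinomial x1 x2 N eta1 eta2) * krawtchouk2 N u1 v1 u2 v2 n1 n2 x1 x2)
         = (1 - complex_of_real eta1 * u1 - complex_of_real eta2 * v1) ^ n1
           * (1 - complex_of_real eta1 * u2 - complex_of_real eta2 * v2) ^ n2"
proof -
  define a where "a = complex_of_real eta1"
  define b where "b = complex_of_real eta2"
  define S where "S = {(x1::nat,x2::nat). x1 + x2 \<le> N}"
  define T where "T = {(i::nat,j::nat,k::nat,l::nat). i + j + k + l \<le> N}"
  define cf :: "nat \<times> nat \<times> nat \<times> nat \<Rightarrow> complex" where
    "cf = (\<lambda>(i,j,k,l). pochhammer (- of_nat n1) (i + j) * pochhammer (- of_nat n2) (k + l)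
       / (fact i * fact j * fact k * fact l * pochhammer (- of_nat N) (i + j + k + l))
       * u1 ^ i * v1 ^ j * u2 ^ k * v2 ^ l)"
  define w :: "nat \<times> nat \<Rightarrow> complex" where
    "w = (\<lambda>(x1,x2). complex_of_real (trinomial x1 x2 N eta1 eta2))"
  define F :: "nat \<times> nat \<Rightarrow> nat \<times> nat \<times> nat \<times> nat \<Rightarrow> complex" where
    "F = (\<lambda>(x1,x2) (i,j,k,l). pochhammer (- of_nat x1) (i + k) * pochhammer (- of_nat x2) (j + l))"
  define g1 where "g1 = (\<lambda>i j. pochhammer (- of_nat n1 :: complex) (i+j) / (fact i * fact j) * (a * u1)^i * (b * v1)^j)"
  define g2 where "g2 = (\<lambda>k l. pochhammer (- of_nat n2 :: complex) (k+l) / (fact k * fact l) * (a * u2)^k * (b * v2)^l)"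
  have finT: "finite T"
    by (rule finite_subset[of _ "{..N} \<times> {..N} \<times> {..N} \<times> {..N}"]) (auto simp: T_def)
  have "(\<Sum>(x1,x2) \<in> {(x1,x2). x1 + x2 \<le> N}.
            complex_of_real (trinomial x1 x2 N eta1 eta2) * krawtchouk2 N u1 v1 u2 v2 n1 n2 x1 x2)
      = (\<Sum>x\<in>S. \<Sum>t\<in>T. cf t * (w x * F x t))"
    unfolding S_def
  proof (intro sum.cong refl)
    fix x :: "nat \<times> nat"
    obtain x1 x2 where x: "x = (x1,x2)" by (cases x)
    show "(case x of (x1,x2) \<Rightarrow> complex_of_real (trinomial x1 x2 N eta1 eta2) * krawtchouk2 N u1 v1 u2 v2 n1 n2 x1 x2)
      = (\<Sum>t\<in>T. cf t * (w x * F x t))"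
      unfolding x krawtchouk2_def T_def prod.case sum_distrib_left
      by (intro sum.cong refl) (auto simp: cf_def w_def F_def split: prod.splits)
  qed
  also have "\<dots> = (\<Sum>t\<in>T. cf t * (\<Sum>x\<in>S. w x * F x t))"
    by (subst sum.swap) (simp add: sum_distrib_left)
  also have "\<dots> = (\<Sum>t\<in>T. case t of (i,j,k,l) \<Rightarrow> g1 i j * g2 k l)"
  proof (intro sum.cong refl)
    fix t assume tT: "t \<in> T"
    obtain i j k l where t: "t = (i,j,k,l)" by (cases t) auto
    have le: "i + j + k + l \<le> N" using tT t T_def by simp
    have mom: "(\<Sum>x\<in>S. w x * F x t) = pochhammer (- of_nat N) (i+j+k+l) * a^(i+k) * b^(j+l)"
    proof -
      have "(\<Sum>x\<in>S. w x * F x t) = (\<Sum>(x1,x2)\<in>{(x1,x2). x1 + x2 \<le> N}.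
        fact N / (fact x1 * fact x2 * fact (N - x1 - x2)) * a^x1 * b^x2 * (1 - a - b)^(N-x1-x2)
        * pochhammer (- of_nat x1) (i+k) * pochhammer (- of_nat x2) (j+l))"
        unfolding S_def
        by (intro sum.cong refl) (auto simp: w_def F_def t trinomial_def a_def b_def)
      also have "\<dots> = pochhammer (- of_nat N) ((i+k)+(j+l)) * a^(i+k) * b^(j+l) * (a+b+(1-a-b))^(N-(i+k)-(j+l))"
        by (rule moment) (use le in simp)
      finally show ?thesis by (simp add: algebra_simps)
    qed
    have nz: "pochhammer (- of_nat N :: complex) (i+j+k+l) \<noteq> 0"
      using le by (simp add: pochhammer_of_nat_eq_0_iff)
    show "cf t * (\<Sum>x\<in>S. w x * F x t) = (case t of (i,j,k,l) \<Rightarrow> g1 i j * g2 k l)"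
      unfolding mom using nz by (simp add: t cf_def g1_def g2_def power_add power_mult_distrib field_simps)
  qed
  also have "\<dots> = (\<Sum>(i,j,k,l)\<in>{(i,j,k,l). i + j \<le> n1 \<and> k + l \<le> n2}. g1 i j * g2 k l)"
  proof (rule sum.mono_neutral_right[OF finT])
    show "{(i,j,k,l). i + j \<le> n1 \<and> k + l \<le> n2} \<subseteq> T" using assms(6) by (auto simp: T_def)
    show "\<forall>t\<in>T - {(i,j,k,l). i + j \<le> n1 \<and> k + l \<le> n2}. (case t of (i,j,k,l) \<Rightarrow> g1 i j * g2 k l) = 0"
      by (auto simp: g1_def g2_def pochhammer_of_nat_eq_0_iff)
  qed
  also have "\<dots> = (\<Sum>i\<le>n1. \<Sum>j\<le>n1-i. g1 i j) * (\<Sum>k\<le>n2. \<Sum>l\<le>n2-k. g2 k l)"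
    unfolding quad_sum by (simp only: sum_distrib_right) (simp only: sum_distrib_left)
  also have "\<dots> = (1 - a * u1 - b * v1)^n1 * (1 - a * u2 - b * v2)^n2"
    unfolding g1_def g2_def tri_sum ..
  finally show ?thesis by (simp add: a_def b_def)
qed

end
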